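(* Let $n\ge2$. (1) For every initial vector $\mathbf p^0\in\Delta_n$ with $p^0_i>0$ for all $i$, the trajectory $\mathbf p^{t+1}=F(\mathbf p^t)$ converges to $(\frac1n,\dots,\frac1n)$. (2) The set $\partial\Delta_n=\{\mathbf p\in\Delta_n:\ p_i=0\text{ for some }i\}$ is invariant under $F$, and every fixed point of $F$ lying in $\partial\Delta_n$ is an unstable fixed point of $F$ on $\Delta_n$ (a repeller: arbitrarily small perturbations making its zero coordinates positive are not damped).
   Context: $\Delta_n=\{\mathbf p\in\mathbb R^n: p_i\ge 0,\ \sum_i p_i=1\}$. For $\mathbf p\in\Delta_n$, $L(\mathbf p)=\sum_{k}p_k^2$ and $F(\mathbf p)_i=p_i\frac{n-p_i}{n-L(\mathbf p)}$. *)

theory Defs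
  imports "HOL-Analysis.Analysis"
begin

text \<open>Vectors in R^n are modelled as real^'n, with n = CARD('n).\<close>

definition Delta :: "(real ^ 'n) set" where
  "Delta = {p. (\<forall>i. p $ i \<ge> 0) \<and> (\<Sum>i\<in>UNIV. p $ i) = 1}"

definition Lsq :: "real ^ 'n \<Rightarrow> real" where
  "Lsq p = (\<Sum>k\<in>UNIV. (p $ k)^2)"

definition Fmap :: "real ^ 'n \<Rightarrow> real ^ 'n" where
  "Fmap p = (\<chi> i. p $ i * (real CARD('n) - p $ i) / (real CARD('n) - Lsq p))"

definition bdry_Delta :: "(real ^ 'n) set" where
  "bdry_Delta = {p \<in> Delta. \<exists>i. p $ i = 0}"

definition barycenter :: "real ^ 'n" where
  "barycenter = (\<chi> i. 1 / real CARD('n))"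

definition lyapunov_stable_on :: "'a::metric_space set \<Rightarrow> ('a \<Rightarrow> 'a) \<Rightarrow> 'a \<Rightarrow> bool" where
  "lyapunov_stable_on S f q \<longleftrightarrow>
     (\<forall>\<epsilon>>0. \<exists>\<delta>>0. \<forall>p\<in>S. dist p q < \<delta> \<longrightarrow> (\<forall>t. dist ((f ^^ t) p) q < \<epsilon>))"

definition unstable_fixed_point_on :: "(real ^ 'n) set \<Rightarrow> (real ^ 'n \<Rightarrow> real ^ 'n) \<Rightarrow> real ^ 'n \<Rightarrow> bool" where
  "unstable_fixed_point_on S f q \<longleftrightarrow> q \<in> S \<and> f q = q \<and>
     (\<exists>\<epsilon>>0. \<forall>\<delta>>0. \<exists>p\<in>S. (\<forall>i. p $ i > 0) \<and> dist p q < \<delta> \<and> (\<exists>t. dist ((f ^^ t) p) q \<ge> \<epsilon>))"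

end

theory Submission
  imports Defs
begin

lemma Fmap_nth: "Fmap p $ i = p $ i * (real CARD('n) - p $ i) / (real CARD('n) - Lsq (p::real^'n))"
  by (simp add: Fmap_def)

lemma Delta_nonneg: "p \<in> Delta \<Longrightarrow> p $ i \<ge> 0"
  by (simp add: Delta_def)

lemma Delta_sum: "p \<in> Delta \<Longrightarrow> (\<Sum>i\<in>UNIV. p $ i) = 1"
  by (simp add: Delta_def)

lemma Delta_le1: "p \<in> Delta \<Longrightarrow> p $ i \<le> 1"
proof -
  assume p: "p \<in> Delta"
  have "p $ i \<le> (\<Sum>k\<in>UNIV. p $ k)"
    by (rule member_le_sum) (use p Delta_nonneg in auto)
  then show ?thesis using Delta_sum[OF p] by simp
qed

lemma Lsq_le1: "p \<in> Delta \<Longrightarrow> Lsq p \<le> 1"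
proof -
  assume p: "p \<in> Delta"
  have "Lsq p \<le> (\<Sum>k\<in>UNIV. p $ k)"
    unfolding Lsq_def
  proof (rule sum_mono)
    fix k
    have "0 \<le> p $ k" "p $ k \<le> 1" using p Delta_nonneg Delta_le1 by auto
    then show "(p $ k)^2 \<le> p $ k" by (simp add: power2_eq_square mult_left_le)
  qed
  then show ?thesis using Delta_sum[OF p] by simp
qed

lemma Lsq_less: "CARD('n) \<ge> 2 \<Longrightarrow> (p::real^'n) \<in> Delta \<Longrightarrow> Lsq p < real CARD('n)"
proof -
  assume "CARD('n) \<ge> 2" "p \<in> Delta"
  then have "real CARD('n) \<ge> 2" "Lsq p \<le> 1" using Lsq_le1 by auto
  then show ?thesis by linarith
qed

lemma Fmap_Delta:
  assumes n: "CARD('n) \<ge> 2" and p: "(p::real^'n) \<in> Delta"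
  shows "Fmap p \<in> Delta"
proof -
  define N where "N = real CARD('n)"
  have N2: "N \<ge> 2" using n by (simp add: N_def)
  have L: "Lsq p < N" using Lsq_less[OF n p] by (simp add: N_def)
  have nn: "\<forall>i. Fmap p $ i \<ge> 0"
  proof
    fix i
    have "0 \<le> p $ i" "p $ i \<le> 1" using p Delta_nonneg Delta_le1 by auto
    then show "Fmap p $ i \<ge> 0" unfolding Fmap_nth N_def[symmetric] using L N2
      by (intro divide_nonneg_pos mult_nonneg_nonneg) auto
  qed
  have "(\<Sum>i\<in>UNIV. Fmap p $ i) = (\<Sum>i\<in>UNIV. p $ i * (N - p $ i)) / (N - Lsq p)"
    unfolding Fmap_nth N_def[symmetric] by (simp add: sum_divide_distrib)
  also have "(\<Sum>i\<in>UNIV. p $ i * (N - p $ i)) = N * (\<Sum>i\<in>UNIV. p $ i) - Lsq p"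
    by (simp add: Lsq_def algebra_simps sum_distrib_left sum_subtractf power2_eq_square)
  also have "\<dots> = N - Lsq p" using Delta_sum[OF p] by simp
  finally have "(\<Sum>i\<in>UNIV. Fmap p $ i) = 1" using L by simp
  then show ?thesis using nn by (simp add: Delta_def)
qed

lemma Fmap_pos:
  assumes n: "CARD('n) \<ge> 2" and p: "(p::real^'n) \<in> Delta" and pi: "p $ i > 0"
  shows "Fmap p $ i > 0"
proof -
  have "p $ i \<le> 1" using p Delta_le1 by auto
  moreover have "real CARD('n) \<ge> 2" using n by simp
  ultimately show ?thesis unfolding Fmap_nth using pi Lsq_less[OF n p]
    by (intro divide_pos_pos mult_pos_pos) auto
qed

lemma ratio_step:
  assumes n: "CARD('n) \<ge> 2" and p: "(p::real^'n) \<in> Delta"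
    and pos: "\<forall>k. p $ k > 0"
  shows "\<bar>Fmap p $ j / Fmap p $ i - 1\<bar> \<le> \<bar>p $ j / p $ i - 1\<bar> * (1 - p $ j / real CARD('n))"
proof -
  define N where "N = real CARD('n)"
  define L where "L = Lsq p"
  define a where "a = p $ j"
  define b where "b = p $ i"
  have N2: "N \<ge> 2" using n by (simp add: N_def)
  have LN: "L < N" using Lsq_less[OF n p] by (simp add: N_def L_def)
  have a: "0 < a" "a \<le> 1" using pos p Delta_le1 by (auto simp: a_def)
  have b: "0 < b" "b \<le> 1" using pos p Delta_le1 by (auto simp: b_def)
  have eq: "Fmap p $ j / Fmap p $ i - 1 = (a / b - 1) * ((N - a - b) / (N - b))"
    unfolding Fmap_nth N_def[symmetric] L_def[symmetric] a_def[symmetric] b_def[symmetric]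
  proof -
    have d: "N - L \<noteq> 0" using LN by simp
    have "a * (N - a) / (N - L) / (b * (N - b) / (N - L)) = a * (N - a) / (b * (N - b))"
      using d by simp
    also have "\<dots> - 1 = (a / b - 1) * ((N - a - b) / (N - b))"
    proof -
      have "b \<noteq> 0" "N - b \<noteq> 0" using b N2 by auto
      then show ?thesis by (simp add: field_simps)
    qed
    finally show "a * (N - a) / (N - L) / (b * (N - b) / (N - L)) - 1 = (a / b - 1) * ((N - a - b) / (N - b))" .
  qed
  have f0: "(N - a - b) / (N - b) \<ge> 0" using a b N2 by simp
  have f1: "(N - a - b) / (N - b) \<le> 1 - a / N"
    using a b N2 by (simp add: field_simps)
  have "\<bar>Fmap p $ j / Fmap p $ i - 1\<bar> = \<bar>a / b - 1\<bar> * ((N - a - b) / (N - b))"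
    by (simp only: eq abs_mult abs_of_nonneg[OF f0])
  also have "\<dots> \<le> \<bar>a / b - 1\<bar> * (1 - a / N)"
    by (rule mult_left_mono[OF f1]) simp
  finally show ?thesis by (simp add: a_def b_def N_def)
qed


lemma convergence:
  assumes n: "CARD('n) \<ge> 2" and p0: "(p0::real^'n) \<in> Delta" and pos0: "\<forall>i. p0 $ i > 0"
  shows "(\<lambda>t. (Fmap ^^ t) p0) \<longlonglongrightarrow> barycenter"
proof -
  define N where "N = real CARD('n)"
  have N2: "N \<ge> 2" using n by (simp add: N_def)
  define P where "P t = (Fmap ^^ t) p0" for t
  have PD: "P t \<in> Delta \<and> (\<forall>i. P t $ i > 0)" for t
  proof (induction t)
    case 0 then show ?case using p0 pos0 by (simp add: P_def)
  next
    case (Suc t)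
    have "P (Suc t) = Fmap (P t)" by (simp add: P_def)
    then show ?case using Suc Fmap_Delta[OF n] Fmap_pos[OF n] by auto
  qed
  have mono: "\<bar>P t $ j / P t $ i - 1\<bar> \<le> \<bar>p0 $ j / p0 $ i - 1\<bar>" for t i j
  proof (induction t)
    case 0 then show ?case by (simp add: P_def)
  next
    case (Suc t)
    have e: "P (Suc t) = Fmap (P t)" by (simp add: P_def)
    have "\<bar>P (Suc t) $ j / P (Suc t) $ i - 1\<bar> \<le> \<bar>P t $ j / P t $ i - 1\<bar> * (1 - P t $ j / N)"
      unfolding e N_def using ratio_step[OF n] PD by blast
    also have "\<dots> \<le> \<bar>P t $ j / P t $ i - 1\<bar>"
    proof -
      have "P t $ j / N \<ge> 0" using PD[of t] N2 by (simp add: less_imp_le)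
      then show ?thesis by (simp add: mult_left_le)
    qed
    finally show ?case using Suc by linarith
  qed
  define D where "D i = (\<Sum>j\<in>UNIV. 1 + \<bar>p0 $ j / p0 $ i - 1\<bar>)" for i
  define c where "c i = 1 / D i" for i
  have Dpos: "D i > 0" for i
    unfolding D_def by (rule sum_pos) auto
  have lower: "P t $ i \<ge> c i" for t i
  proof -
    have pi: "P t $ i > 0" using PD by blast
    have "1 = (\<Sum>j\<in>UNIV. P t $ j)" using PD Delta_sum by metis
    also have "\<dots> = (\<Sum>j\<in>UNIV. P t $ i * (P t $ j / P t $ i))"
      using pi by simp
    also have "\<dots> \<le> (\<Sum>j\<in>UNIV. P t $ i * (1 + \<bar>p0 $ j / p0 $ i - 1\<bar>))"
    proof (rule sum_mono)
      fix j
      have "P t $ j / P t $ i \<le> 1 + \<bar>p0 $ j / p0 $ i - 1\<bar>"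
        using mono[of t j i] by linarith
      then show "P t $ i * (P t $ j / P t $ i) \<le> P t $ i * (1 + \<bar>p0 $ j / p0 $ i - 1\<bar>)"
        using pi by (intro mult_left_mono) auto
    qed
    also have "\<dots> = P t $ i * D i" by (simp add: D_def sum_distrib_left)
    finally have "1 \<le> P t $ i * D i" .
    then show ?thesis using Dpos[of i] by (simp add: c_def field_simps)
  qed
  have c0: "c i > 0" for i using Dpos by (simp add: c_def)
  have c1: "c i \<le> 1" for i
    using lower[where t=0 and i=i] Delta_le1[OF p0, of i] by (simp add: P_def)
  have geo: "\<bar>P t $ j / P t $ i - 1\<bar> \<le> \<bar>p0 $ j / p0 $ i - 1\<bar> * (1 - c j / N) ^ t" for t i j
  proof (induction t)
    case 0 then show ?case by (simp add: P_def)
  next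
    case (Suc t)
    have e: "P (Suc t) = Fmap (P t)" by (simp add: P_def)
    have "\<bar>P (Suc t) $ j / P (Suc t) $ i - 1\<bar> \<le> \<bar>P t $ j / P t $ i - 1\<bar> * (1 - P t $ j / N)"
      unfolding e N_def using ratio_step[OF n] PD by blast
    also have "\<dots> \<le> \<bar>P t $ j / P t $ i - 1\<bar> * (1 - c j / N)"
    proof (rule mult_left_mono)
      show "1 - P t $ j / N \<le> 1 - c j / N"
        using lower[where t=t and i=j] N2 by (simp add: divide_right_mono)
    qed simp
    also have "\<dots> \<le> \<bar>p0 $ j / p0 $ i - 1\<bar> * (1 - c j / N) ^ t * (1 - c j / N)"
    proof (rule mult_right_mono[OF Suc])
      show "0 \<le> 1 - c j / N" using c1[of j] N2 by simp
    qed
    also have "\<dots> = \<bar>p0 $ j / p0 $ i - 1\<bar> * (1 - c j / N) ^ Suc t"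
      by (simp only: power_Suc2 mult.assoc)
    finally show ?case .
  qed
  have rat: "(\<lambda>t. P t $ j / P t $ i) \<longlonglongrightarrow> 1" for i j
  proof -
    have r0: "0 \<le> 1 - c j / N" "1 - c j / N < 1" using c1[of j] c0[of j] N2 by auto
    have "(\<lambda>t. \<bar>p0 $ j / p0 $ i - 1\<bar> * (1 - c j / N) ^ t) \<longlonglongrightarrow> \<bar>p0 $ j / p0 $ i - 1\<bar> * 0"
      by (intro tendsto_mult tendsto_const LIMSEQ_power_zero) (use r0 in auto)
    then have g0: "(\<lambda>t. \<bar>p0 $ j / p0 $ i - 1\<bar> * (1 - c j / N) ^ t) \<longlonglongrightarrow> 0" by simp
    have "(\<lambda>t. P t $ j / P t $ i - 1) \<longlonglongrightarrow> 0"
      by (rule Lim_null_comparison[OF always_eventually g0]) (use geo in simp)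
    then have "(\<lambda>t. (P t $ j / P t $ i - 1) + 1) \<longlonglongrightarrow> 0 + 1"
      by (intro tendsto_add tendsto_const)
    then show ?thesis by simp
  qed
  have comp: "(\<lambda>t. P t $ i) \<longlonglongrightarrow> 1 / N" for i
  proof -
    have "(\<lambda>t. 1 / (\<Sum>j\<in>UNIV. P t $ j / P t $ i)) \<longlonglongrightarrow> 1 / (\<Sum>j\<in>(UNIV::'n set). 1)"
      by (intro tendsto_divide tendsto_const tendsto_sum rat) simp
    moreover have "1 / (\<Sum>j\<in>UNIV. P t $ j / P t $ i) = P t $ i" for t
    proof -
      have "(\<Sum>j\<in>UNIV. P t $ j / P t $ i) = (\<Sum>j\<in>UNIV. P t $ j) / P t $ i"
        by (simp add: sum_divide_distrib)
      also have "\<dots> = 1 / P t $ i" using PD Delta_sum by metis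
      finally show ?thesis by simp
    qed
    ultimately show ?thesis by (simp add: N_def)
  qed
  show ?thesis
    by (rule vec_tendstoI) (use comp in \<open>simp add: P_def barycenter_def N_def\<close>)
qed


lemma bary_Delta: "(barycenter::real^'n) \<in> Delta"
  by (simp add: Delta_def barycenter_def)

lemma bdry_unstable:
  assumes n: "CARD('n) \<ge> 2" and q: "(q::real^'n) \<in> bdry_Delta"
  shows "\<exists>\<epsilon>>0. \<forall>\<delta>>0. \<exists>p\<in>Delta. (\<forall>i. p $ i > 0) \<and> dist p q < \<delta> \<and> (\<exists>t. dist ((Fmap ^^ t) p) q \<ge> \<epsilon>)"
proof -
  define N where "N = real CARD('n)"
  have N2: "N \<ge> 2" using n by (simp add: N_def)
  define b where "b = (barycenter::real^'n)"
  have qD: "q \<in> Delta" using q by (simp add: bdry_Delta_def)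
  obtain i0 where i0: "q $ i0 = 0" using q by (auto simp: bdry_Delta_def)
  have bi: "b $ i = 1 / N" for i by (simp add: b_def barycenter_def N_def)
  have "b \<noteq> q" using i0 bi[of i0] N2 by auto
  then have dpos: "dist b q > 0" by simp
  define e where "e = dist b q / 2"
  have e0: "e > 0" using dpos by (simp add: e_def)
  show ?thesis
  proof (intro exI[of _ e] conjI allI impI)
    show "e > 0" by (rule e0)
    fix \<delta> :: real assume d: "\<delta> > 0"
    define l where "l = min (1/2) (\<delta> / (2 * dist b q))"
    have l0: "l > 0" using d dpos by (simp add: l_def)
    have l1: "l \<le> 1/2" by (simp add: l_def)
    have l2: "l * dist b q \<le> \<delta> / 2"
    proof -
      have "l \<le> \<delta> / (2 * dist b q)" by (simp add: l_def)
      then show ?thesis using dpos by (simp add: field_simps)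
    qed
    define p where "p = q + l *\<^sub>R (b - q)"
    have pi: "p $ i = (1 - l) * q $ i + l / N" for i
      by (simp add: p_def bi algebra_simps)
    have ppos: "\<forall>i. p $ i > 0"
    proof
      fix i
      have "(1 - l) * q $ i \<ge> 0" using l1 Delta_nonneg[OF qD, of i] by simp
      moreover have "l / N > 0" using l0 N2 by simp
      ultimately show "p $ i > 0" unfolding pi by linarith
    qed
    have pD: "p \<in> Delta"
    proof -
      have "(\<Sum>i\<in>UNIV. p $ i) = (\<Sum>i\<in>UNIV. q $ i) + l * ((\<Sum>i\<in>UNIV. b $ i) - (\<Sum>i\<in>UNIV. q $ i))"
        by (simp add: p_def sum.distrib sum_distrib_left[symmetric] sum_subtractf[symmetric])
      also have "\<dots> = 1"
      proof -
        have "(\<Sum>i\<in>UNIV. b $ i) = 1" using N2 by (simp add: bi N_def)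
        then show ?thesis using Delta_sum[OF qD] by simp
      qed
      finally show ?thesis using ppos by (simp add: Delta_def less_imp_le)
    qed
    have "dist p q = l * dist b q"
      using l0 by (simp add: p_def dist_norm)
    then have dpq: "dist p q < \<delta>" using l2 d by linarith
    have "(\<lambda>t. (Fmap ^^ t) p) \<longlonglongrightarrow> b"
      unfolding b_def by (rule convergence[OF n pD ppos])
    then have "eventually (\<lambda>t. dist ((Fmap ^^ t) p) b < e) sequentially"
      using e0 tendstoD by blast
    then obtain t where t: "dist ((Fmap ^^ t) p) b < e"
      by (auto simp: eventually_sequentially)
    have "dist b q \<le> dist b ((Fmap ^^ t) p) + dist ((Fmap ^^ t) p) q"
      by (rule dist_triangle)
    then have "dist ((Fmap ^^ t) p) q \<ge> e"
      using t by (simp add: e_def dist_commute)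
    then show "\<exists>p\<in>Delta. (\<forall>i. p $ i > 0) \<and> dist p q < \<delta> \<and> (\<exists>t. dist ((Fmap ^^ t) p) q \<ge> e)"
      using pD ppos dpq by blast
  qed
qed

theorem corollary1:
  assumes "CARD('n) \<ge> 2"
  shows "(\<forall>p0 :: real ^ 'n. p0 \<in> Delta \<and> (\<forall>i. p0 $ i > 0) \<longrightarrow>
            (\<lambda>t. (Fmap ^^ t) p0) \<longlonglongrightarrow> barycenter)
       \<and> (\<forall>p :: real ^ 'n. p \<in> bdry_Delta \<longrightarrow> Fmap p \<in> bdry_Delta)
       \<and> (\<forall>q :: real ^ 'n. q \<in> bdry_Delta \<and> Fmap q = q \<longrightarrow>
            unstable_fixed_point_on Delta Fmap q \<and> \<not> lyapunov_stable_on Delta Fmap q)"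
proof (intro conjI allI impI)
  fix p0 :: "real^'n" assume "p0 \<in> Delta \<and> (\<forall>i. p0 $ i > 0)"
  then show "(\<lambda>t. (Fmap ^^ t) p0) \<longlonglongrightarrow> barycenter"
    using convergence[OF assms] by blast
next
  fix p :: "real^'n" assume p: "p \<in> bdry_Delta"
  then have pD: "p \<in> Delta" by (simp add: bdry_Delta_def)
  obtain i where "p $ i = 0" using p by (auto simp: bdry_Delta_def)
  then have "Fmap p $ i = 0" by (simp add: Fmap_nth)
  then show "Fmap p \<in> bdry_Delta" using Fmap_Delta[OF assms pD] by (auto simp: bdry_Delta_def)
next
  fix q :: "real^'n" assume q: "q \<in> bdry_Delta \<and> Fmap q = q"
  have qD: "q \<in> Delta" using q by (simp add: bdry_Delta_def)
  have U: "\<exists>\<epsilon>>0. \<forall>\<delta>>0. \<exists>p\<in>Delta. (\<forall>i. p $ i > 0) \<and> dist p q < \<delta> \<and> (\<exists>t. dist ((Fmap ^^ t) p) q \<ge> \<epsilon>)"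
    using bdry_unstable[OF assms] q by blast
  then show "unstable_fixed_point_on Delta Fmap q"
    unfolding unstable_fixed_point_on_def using qD q by blast
  show "\<not> lyapunov_stable_on Delta Fmap q"
  proof
    assume L: "lyapunov_stable_on Delta Fmap q"
    obtain e where e: "e > 0" "\<forall>\<delta>>0. \<exists>p\<in>Delta. (\<forall>i. p $ i > 0) \<and> dist p q < \<delta> \<and> (\<exists>t. dist ((Fmap ^^ t) p) q \<ge> e)"
      using U by blast
    obtain d where d: "d > 0" "\<forall>p\<in>Delta. dist p q < d \<longrightarrow> (\<forall>t. dist ((Fmap ^^ t) p) q < e)"
      using L e(1) unfolding lyapunov_stable_on_def by blast
    obtain p t where "p \<in> Delta" "dist p q < d" "dist ((Fmap ^^ t) p) q \<ge> e"
      using e(2) d(1) by blast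
    then show False using d(2) by (meson not_less)
  qed
qed

end
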